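(* Let $\epsilon>0$ and consider the algorithm with exact searches: given $\theta_{k-1}\in\Theta\cap\mathbb{V}$, let $\tau_{k-1}$ be a maximizer of $\tau\mapsto DL(\theta_{k-1},V_\tau)$ over $\tau\ge0$, and $\theta_k:=\operatorname{argsup}_{\theta\in\Theta\cap\mathbb{V}_{D(\theta_{k-1})\cup\{\tau_{k-1}\}}}L(\theta)$. Let $R:=L(\theta_{k-1})$ (assumed finite), let $s_R\ge 0$ and $m_R<\beta$ be constants such that every $\varphi\in\Theta$ with $L(\varphi)\ge R$ satisfies $|\varphi(0)|\le s_R$ and $\sup_x\varphi'(x+)\le m_R$, and let $\gamma:=\int_0^\infty(x^2+x_n^2)e^{s_R+m_Rx}M(dx)$. If $\sup_\tau DL(\theta_{k-1},V_\tau)\ge\epsilon$, then \[L(\theta_k)-L(\theta_{k-1})\ge\frac{\epsilon^2}{2\gamma}.\]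
   Context: Let $f$ be a probability density on $\mathbb{R}_{\ge0}$ satisfying the standing assumptions: (A1) $f$ is continuous and $f(x)>0$ for all $x>0$; (A2) there is $\beta\in\mathbb{R}$ such that for every $\lambda\in\mathbb{R}$, $\int_0^\infty e^{\lambda x}f(x)\,dx<\infty$ if and only if $\lambda<\beta$, and $\lim_{\lambda\to\beta^-}\int_0^\infty e^{\lambda x}f(x)\,dx=\infty$; (A3) for every $\lambda\in\mathbb{R}$, $\int_0^\infty e^{\lambda x}f(x)dx<\infty$ implies $\int_0^\infty x^2e^{\lambda x}f(x)dx<\infty$. Let $M$ be the measure on $\mathbb{R}_{\ge0}$ with density $f$. Fix data $x_1\le\dots\le x_n$ in $\mathbb{R}_{\ge0}$ with empirical distribution $\hat P=\frac1n\sum_{i=1}^n\delta_{x_i}$. $\Theta$ is the set of convex non-decreasing functions $\theta:\mathbb{R}_{\ge0}\to\mathbb{R}$. For $\theta\in\Theta$, $L(\theta):=\int\theta\,d\hat P-\int e^{\theta}\,dM+1\in[-\infty,\infty)$. For $\theta\in\Theta$ and a function $v$, $DL(\theta,v):=\lim_{t\to0^+}\frac{L(\theta+tv)-L(\theta)}{t}$. $\mathbb{V}$ is the set of continuous piecewise linear functions $v:\mathbb{R}_{\ge0}\to\mathbb{R}$ with finitely many breakpoints; $D(v)=\{\tau\ge0: v'(\tau-)\neq v'(\tau+)\}$ is its set of breakpoints; for finite $S\subset\mathbb{R}_{\ge0}$, $\mathbb{V}_S=\{v\in\mathbb{V}:D(v)\subseteq S\}$. For $\tau\ge0$, $V_\tau(x):=(x-\tau)^+$.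 *)

theory Defs
  imports "HOL-Analysis.Analysis" "HOL-Probability.Probability"
begin

definition dens_measure :: "(real \<Rightarrow> real) \<Rightarrow> real measure" where
  "dens_measure f = density lborel (\<lambda>x. ennreal (indicator {0..} x * f x))"

definition Theta :: "(real \<Rightarrow> real) set" where
  "Theta = {\<theta>. convex_on {0..} \<theta> \<and> mono_on {0..} \<theta>}"

definition right_deriv :: "(real \<Rightarrow> real) \<Rightarrow> real \<Rightarrow> real" where
  "right_deriv v x = Lim (at_right x) (\<lambda>y. (v y - v x) / (y - x))"

definition left_deriv :: "(real \<Rightarrow> real) \<Rightarrow> real \<Rightarrow> real" where
  "left_deriv v x = Lim (at_left x) (\<lambda>y. (v y - v x) / (y - x))"

definition PL :: "(real \<Rightarrow> real) set" where
  "PL = {v. continuous_on {0..} v \<and>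
     (\<exists>S. finite S \<and> S \<subseteq> {0..} \<and>
        (\<forall>x y. 0 \<le> x \<and> x < y \<and> {x<..<y} \<inter> S = {} \<longrightarrow>
           (\<forall>z\<in>{x..y}. v z = v x + (v y - v x) / (y - x) * (z - x))))}"

text \<open>Breakpoints (the point 0 is never counted as a breakpoint, since the
  left derivative at 0 is not defined for functions on [0,inf)).\<close>
definition breakpoints :: "(real \<Rightarrow> real) \<Rightarrow> real set" where
  "breakpoints v = {\<tau>. \<tau> > 0 \<and> left_deriv v \<tau> \<noteq> right_deriv v \<tau>}"

definition PL_on :: "real set \<Rightarrow> (real \<Rightarrow> real) set" where
  "PL_on S = {v \<in> PL. breakpoints v \<subseteq> S}"

definition hinge :: "real \<Rightarrow> real \<Rightarrow> real" where
  "hinge \<tau> x = max (x - \<tau>) 0"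

text \<open>The objective L (data given as a list xs, empirical measure = uniform on xs).\<close>
definition Lobj :: "(real \<Rightarrow> real) \<Rightarrow> real list \<Rightarrow> (real \<Rightarrow> real) \<Rightarrow> ereal" where
  "Lobj f xs \<theta> = ereal (sum_list (map \<theta> xs) / real (length xs))
      - enn2ereal (\<integral>\<^sup>+ x. ennreal (exp (\<theta> x)) \<partial>dens_measure f) + 1"

definition DL :: "(real \<Rightarrow> real) \<Rightarrow> real list \<Rightarrow> (real \<Rightarrow> real) \<Rightarrow> (real \<Rightarrow> real) \<Rightarrow> ereal" where
  "DL f xs \<theta> v = Lim (at_right 0)
      (\<lambda>t. (Lobj f xs (\<lambda>x. \<theta> x + t * v x) - Lobj f xs \<theta>) / ereal t)"

end

theory Submission
  imports Defs
begin


lemma dens_sets[simp]: "sets (dens_measure f) = sets borel"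
  by (simp add: dens_measure_def)

lemma dens_meas[measurable_cong, simp]: "measurable (dens_measure f) N = measurable borel N"
  by (rule measurable_cong_sets) auto

lemma cont_max0: "continuous_on {0..} g \<Longrightarrow> continuous_on UNIV (\<lambda>x::real. g (max x 0))"
  by (rule continuous_on_compose2[where t="{0..}"]) (auto intro!: continuous_intros)

lemma dens_AE:
  assumes "continuous_on {0..} f"
  shows "AE x in dens_measure f. 0 \<le> x"
proof -
  have e: "(\<lambda>x. ennreal (indicator {0..} x * f x)) = (\<lambda>x. ennreal (indicator {0..} x * f (max x 0)))"
    by (auto simp: indicator_def fun_eq_iff)
  have m: "(\<lambda>x. ennreal (indicator {0..} x * f (max x 0))) \<in> borel_measurable borel"
    using cont_max0[OF assms] by (intro measurable_compose[OF _ measurable_ennreal] borel_measurable_times borel_measurable_indicator)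
      (auto intro: borel_measurable_continuous_onI)
  show ?thesis unfolding dens_measure_def e
    by (subst AE_density) (use m in \<open>auto simp: indicator_def\<close>)
qed



lemma int_exp0:
  assumes A2: "\<forall>l::real. (\<integral>\<^sup>+ x. ennreal (exp (l * x)) \<partial>dens_measure f) < \<infinity> \<longleftrightarrow> l < \<beta>"
    and "l < \<beta>"
  shows "integrable (dens_measure f) (\<lambda>x. exp (l * x))"
  using A2 assms(2) by (subst integrable_iff_bounded) auto

lemma int_exp2:
  assumes A2: "\<forall>l::real. (\<integral>\<^sup>+ x. ennreal (exp (l * x)) \<partial>dens_measure f) < \<infinity> \<longleftrightarrow> l < \<beta>"
    and A3: "\<forall>l::real. (\<integral>\<^sup>+ x. ennreal (exp (l * x)) \<partial>dens_measure f) < \<infinity> \<longrightarrow>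
               (\<integral>\<^sup>+ x. ennreal (x\<^sup>2 * exp (l * x)) \<partial>dens_measure f) < \<infinity>"
    and "l < \<beta>"
  shows "integrable (dens_measure f) (\<lambda>x. x\<^sup>2 * exp (l * x))"
proof -
  have "(\<integral>\<^sup>+ x. ennreal (x\<^sup>2 * exp (l * x)) \<partial>dens_measure f) < \<infinity>"
    using A2 A3 assms(3) by blast
  then show ?thesis
    by (subst integrable_iff_bounded) (auto simp: abs_mult)
qed

lemma int_exp1:
  assumes A2: "\<forall>l::real. (\<integral>\<^sup>+ x. ennreal (exp (l * x)) \<partial>dens_measure f) < \<infinity> \<longleftrightarrow> l < \<beta>"
    and A3: "\<forall>l::real. (\<integral>\<^sup>+ x. ennreal (exp (l * x)) \<partial>dens_measure f) < \<infinity> \<longrightarrow>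
               (\<integral>\<^sup>+ x. ennreal (x\<^sup>2 * exp (l * x)) \<partial>dens_measure f) < \<infinity>"
    and "l < \<beta>"
  shows "integrable (dens_measure f) (\<lambda>x. x * exp (l * x))"
proof (rule Bochner_Integration.integrable_bound[where f="\<lambda>x. exp (l * x) + x\<^sup>2 * exp (l * x)"])
  show "integrable (dens_measure f) (\<lambda>x. exp (l * x) + x\<^sup>2 * exp (l * x))"
    using int_exp0[OF A2 assms(3)] int_exp2[OF A2 A3 assms(3)] by auto
  show "AE x in dens_measure f. norm (x * exp (l * x)) \<le> norm (exp (l * x) + x\<^sup>2 * exp (l * x))"
  proof (intro AE_I2)
    fix x :: real
    have "\<bar>x\<bar> \<le> 1 + x\<^sup>2"
    proof (cases "\<bar>x\<bar> \<le> 1")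
      case True then show ?thesis by (simp add: add_increasing2)
    next
      case False
      then have "\<bar>x\<bar> * 1 \<le> \<bar>x\<bar> * \<bar>x\<bar>" by (intro mult_left_mono) auto
      also have "\<dots> = x\<^sup>2" by (simp add: power2_eq_square abs_mult[symmetric])
      finally show ?thesis by simp
    qed
    then have "\<bar>x\<bar> * exp (l * x) \<le> (1 + x\<^sup>2) * exp (l * x)" by (intro mult_right_mono) auto
    then show "norm (x * exp (l * x)) \<le> norm (exp (l * x) + x\<^sup>2 * exp (l * x))"
      by (simp add: abs_mult algebra_simps)
  qed
qed auto

lemma int_exp_gen:
  assumes A2: "\<forall>l::real. (\<integral>\<^sup>+ x. ennreal (exp (l * x)) \<partial>dens_measure f) < \<infinity> \<longleftrightarrow> l < \<beta>"
    and A3: "\<forall>l::real. (\<integral>\<^sup>+ x. ennreal (exp (l * x)) \<partial>dens_measure f) < \<infinity> \<longrightarrow>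
               (\<integral>\<^sup>+ x. ennreal (x\<^sup>2 * exp (l * x)) \<partial>dens_measure f) < \<infinity>"
    and "l < \<beta>"
  shows "integrable (dens_measure f) (\<lambda>x. exp (c + l * x))"
    and "integrable (dens_measure f) (\<lambda>x. x * exp (c + l * x))"
    and "integrable (dens_measure f) (\<lambda>x. x\<^sup>2 * exp (c + l * x))"
  using integrable_mult_right[OF int_exp0[OF A2 assms(3)], of "exp c"]
    integrable_mult_right[OF int_exp1[OF A2 A3 assms(3)], of "exp c"]
    integrable_mult_right[OF int_exp2[OF A2 A3 assms(3)], of "exp c"]
  by (simp_all add: exp_add algebra_simps)



lemma PL_local_right:
  assumes "v \<in> PL" "0 \<le> x"
  shows "\<exists>\<delta> c. \<delta> > 0 \<and> (\<forall>y. x \<le> y \<and> y \<le> x + \<delta> \<longrightarrow> v y = v x + c * (y - x))"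
proof -
  obtain S where S: "finite S" "S \<subseteq> {0..}"
    and aff0: "\<forall>a b. 0 \<le> a \<and> a < b \<and> {a<..<b} \<inter> S = {} \<longrightarrow>
           (\<forall>z\<in>{a..b}. v z = v a + (v b - v a) / (b - a) * (z - a))"
    using assms(1) unfolding PL_def mem_Collect_eq by (elim conjE exE) (rule that)
  have aff: "\<And>a b. 0 \<le> a \<Longrightarrow> a < b \<Longrightarrow> {a<..<b} \<inter> S = {} \<Longrightarrow>
           (\<forall>z\<in>{a..b}. v z = v a + (v b - v a) / (b - a) * (z - a))"
    using aff0 by blast
  define T where "T = {s\<in>S. x < s}"
  have fT: "finite T" using S(1) by (simp add: T_def)
  define \<delta> where "\<delta> = (if T = {} then 1 else Min T - x)"
  have dpos: "\<delta> > 0"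
  proof (cases "T = {}")
    case False
    then have "Min T \<in> T" using fT by (rule Min_in[rotated])
    then show ?thesis using False by (simp add: \<delta>_def T_def)
  qed (simp add: \<delta>_def)
  have emp: "{x<..<x+\<delta>} \<inter> S = {}"
  proof (rule ccontr)
    assume "{x<..<x+\<delta>} \<inter> S \<noteq> {}"
    then obtain s where s: "s \<in> S" "x < s" "s < x + \<delta>" by auto
    then have "s \<in> T" by (simp add: T_def)
    then have "Min T \<le> s" "T \<noteq> {}" using fT by auto
    then have "\<delta> = Min T - x" by (simp add: \<delta>_def)
    then show False using s \<open>Min T \<le> s\<close> by linarith
  qed
  have A0: "\<forall>z\<in>{x..x+\<delta>}. v z = v x + (v (x+\<delta>) - v x) / (x + \<delta> - x) * (z - x)"
    by (rule aff[OF assms(2) _ emp]) (use dpos in linarith)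
  have A: "\<forall>z\<in>{x..x+\<delta>}. v z = v x + (v (x+\<delta>) - v x) / \<delta> * (z - x)"
    using A0 by (simp only: add_diff_cancel_left')
  show ?thesis
  proof (rule exI[of _ \<delta>], rule exI[of _ "(v (x+\<delta>) - v x) / \<delta>"], intro conjI allI impI)
    show "\<delta> > 0" by (rule dpos)
    fix y assume "x \<le> y \<and> y \<le> x + \<delta>"
    then show "v y = v x + (v (x+\<delta>) - v x) / \<delta> * (y - x)" using bspec[OF A, of y] by simp
  qed
qed

lemma PL_local_left:
  assumes "v \<in> PL" "0 < x"
  shows "\<exists>\<delta> c. \<delta> > 0 \<and> \<delta> \<le> x \<and> (\<forall>y. x - \<delta> \<le> y \<and> y \<le> x \<longrightarrow> v y = v x + c * (y - x))"
proof -
  obtain S where S: "finite S" "S \<subseteq> {0..}"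
    and aff0: "\<forall>a b. 0 \<le> a \<and> a < b \<and> {a<..<b} \<inter> S = {} \<longrightarrow>
           (\<forall>z\<in>{a..b}. v z = v a + (v b - v a) / (b - a) * (z - a))"
    using assms(1) unfolding PL_def mem_Collect_eq by (elim conjE exE) (rule that)
  have aff: "\<And>a b. 0 \<le> a \<Longrightarrow> a < b \<Longrightarrow> {a<..<b} \<inter> S = {} \<Longrightarrow>
           (\<forall>z\<in>{a..b}. v z = v a + (v b - v a) / (b - a) * (z - a))"
    using aff0 by blast
  define T where "T = {s\<in>S. s < x}"
  have fT: "finite T" using S(1) by (simp add: T_def)
  define \<delta> where "\<delta> = (if T = {} then x else min x (x - Max T))"
  have dpos0: "\<delta> > 0 \<and> \<delta> \<le> x"
  proof (cases "T = {}")
    case False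
    then have "Max T \<in> T" using fT by (rule Max_in[rotated])
    then show ?thesis using False assms(2) by (simp add: \<delta>_def T_def)
  qed (use assms(2) in \<open>simp add: \<delta>_def\<close>)
  then have dpos: "\<delta> > 0" "\<delta> \<le> x" by auto
  have emp: "{x-\<delta><..<x} \<inter> S = {}"
  proof (rule ccontr)
    assume "{x-\<delta><..<x} \<inter> S \<noteq> {}"
    then obtain s where s: "s \<in> S" "x - \<delta> < s" "s < x" by auto
    then have "s \<in> T" by (simp add: T_def)
    then have "s \<le> Max T" "T \<noteq> {}" using fT by auto
    then have "\<delta> \<le> x - Max T" by (simp add: \<delta>_def)
    then show False using s \<open>s \<le> Max T\<close> by linarith
  qed
  have A0: "\<forall>z\<in>{x-\<delta>..x}. v z = v (x-\<delta>) + (v x - v (x-\<delta>)) / (x - (x-\<delta>)) * (z - (x-\<delta>))"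
    by (rule aff[OF _ _ emp]) (use dpos in linarith)+
  have A: "\<forall>z\<in>{x-\<delta>..x}. v z = v (x-\<delta>) + (v x - v (x-\<delta>)) / \<delta> * (z - (x-\<delta>))"
    using A0 by (simp only: diff_diff_eq2 add_diff_cancel_left' diff_add_cancel)
  define q where "q = (v x - v (x-\<delta>)) / \<delta>"
  have qd: "q * \<delta> = v x - v (x-\<delta>)" using dpos by (simp add: q_def)
  have B: "\<forall>z. x-\<delta> \<le> z \<and> z \<le> x \<longrightarrow> v z = v x + q * (z - x)"
  proof (intro allI impI)
    fix z assume z: "x-\<delta> \<le> z \<and> z \<le> x"
    have "v z = v (x-\<delta>) + q * (z - (x-\<delta>))" using bspec[OF A, of z] z unfolding q_def by simp
    also have "\<dots> = v (x-\<delta>) + q * \<delta> + q * (z - x)" by (simp add: algebra_simps)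
    also have "\<dots> = v x + q * (z - x)" using qd by simp
    finally show "v z = v x + q * (z - x)" .
  qed
  show ?thesis
  proof (rule exI[of _ \<delta>], rule exI[of _ q], intro conjI allI impI)
    show "\<delta> > 0" "\<delta> \<le> x" by (rule dpos)+
    fix y assume "x - \<delta> \<le> y \<and> y \<le> x"
    then show "v y = v x + q * (y - x)" using spec[OF B, of y] by simp
  qed
qed

lemma quot_right:
  assumes "\<delta> > 0" "\<forall>y. x \<le> y \<and> y \<le> x + \<delta> \<longrightarrow> v y = v x + c * (y - x)"
  shows "((\<lambda>y. (v y - v x) / (y - x)) \<longlongrightarrow> c) (at_right x)" "right_deriv v x = c"
proof -
  have "eventually (\<lambda>y. y \<in> {x<..<x+\<delta>}) (at_right x)"
    using assms(1) by (intro eventually_at_right_real) simp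
  then have "eventually (\<lambda>y. (v y - v x) / (y - x) = c) (at_right x)"
  proof eventually_elim
    case (elim y)
    then have "v y = v x + c * (y - x)" using assms(2)[rule_format, of y] by simp
    then show ?case using elim by simp
  qed
  then show 1: "((\<lambda>y. (v y - v x) / (y - x)) \<longlongrightarrow> c) (at_right x)" by (rule tendsto_eventually)
  show "right_deriv v x = c" unfolding right_deriv_def by (rule tendsto_Lim[OF _ 1]) simp
qed

lemma quot_left:
  assumes "\<delta> > 0" "\<forall>y. x - \<delta> \<le> y \<and> y \<le> x \<longrightarrow> v y = v x + c * (y - x)"
  shows "((\<lambda>y. (v y - v x) / (y - x)) \<longlongrightarrow> c) (at_left x)" "left_deriv v x = c"
proof -
  have "eventually (\<lambda>y. y \<in> {x-\<delta><..<x}) (at_left x)"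
    using assms(1) by (intro eventually_at_left_real) simp
  then have "eventually (\<lambda>y. (v y - v x) / (y - x) = c) (at_left x)"
  proof eventually_elim
    case (elim y)
    then have "v y = v x + c * (y - x)" using assms(2)[rule_format, of y] by simp
    then show ?case using elim by simp
  qed
  then show 1: "((\<lambda>y. (v y - v x) / (y - x)) \<longlongrightarrow> c) (at_left x)" by (rule tendsto_eventually)
  show "left_deriv v x = c" unfolding left_deriv_def by (rule tendsto_Lim[OF _ 1]) simp
qed

lemma PL_right_tendsto:
  assumes "v \<in> PL" "0 \<le> x"
  shows "((\<lambda>y. (v y - v x) / (y - x)) \<longlongrightarrow> right_deriv v x) (at_right x)"
  using PL_local_right[OF assms] quot_right by metis

lemma PL_left_tendsto:
  assumes "v \<in> PL" "0 < x"
  shows "((\<lambda>y. (v y - v x) / (y - x)) \<longlongrightarrow> left_deriv v x) (at_left x)"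
  using PL_local_left[OF assms] quot_left by metis



lemma slope_mono:
  assumes "convex_on {0..} \<phi>" "0 \<le> a" "a < b" "b < c"
  shows "(\<phi> b - \<phi> a) / (b - a) \<le> (\<phi> c - \<phi> a) / (c - a)"
    and "(\<phi> c - \<phi> a) / (c - a) \<le> (\<phi> c - \<phi> b) / (c - b)"
proof -
  have I: "a \<in> {0..}" "c \<in> {0..}" using assms by auto
  note L = convex_on_slope_le[OF assms(1) I assms(3,4)]
  have e1: "(\<phi> a - \<phi> b) / (a - b) = (\<phi> b - \<phi> a) / (b - a)"
    by (metis minus_diff_eq minus_divide_divide)
  have e2: "(\<phi> a - \<phi> c) / (a - c) = (\<phi> c - \<phi> a) / (c - a)"
    by (metis minus_diff_eq minus_divide_divide)
  have e3: "(\<phi> b - \<phi> c) / (b - c) = (\<phi> c - \<phi> b) / (c - b)"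
    by (metis minus_diff_eq minus_divide_divide)
  show "(\<phi> b - \<phi> a) / (b - a) \<le> (\<phi> c - \<phi> a) / (c - a)" using L(1) e1 e2 by simp
  show "(\<phi> c - \<phi> a) / (c - a) \<le> (\<phi> c - \<phi> b) / (c - b)" using L(2) e2 e3 by simp
qed

lemma rd_ge_chord:
  assumes "convex_on {0..} \<phi>" "\<phi> \<in> PL" "0 < x"
  shows "(\<phi> x - \<phi> 0) / x \<le> right_deriv \<phi> x"
proof (rule tendsto_lowerbound[OF PL_right_tendsto[OF assms(2)]])
  show "0 \<le> x" using assms(3) by simp
  have "eventually (\<lambda>y. y \<in> {x<..<x+1}) (at_right x)" by (intro eventually_at_right_real) simp
  then show "eventually (\<lambda>y. (\<phi> x - \<phi> 0) / x \<le> (\<phi> y - \<phi> x) / (y - x)) (at_right x)"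
  proof eventually_elim
    case (elim y)
    then have "(\<phi> x - \<phi> 0) / (x - 0) \<le> (\<phi> y - \<phi> 0) / (y - 0)"
          "(\<phi> y - \<phi> 0) / (y - 0) \<le> (\<phi> y - \<phi> x) / (y - x)"
      using slope_mono[OF assms(1), of 0 x y] assms(3) by auto
    then show ?case by simp
  qed
qed simp

lemma rd_bdd:
  assumes "convex_on {0..} \<phi>" "\<phi> \<in> PL"
  shows "\<exists>K. \<forall>x\<ge>0. right_deriv \<phi> x \<le> K"
proof -
  obtain S where S: "finite S" "S \<subseteq> {0..}"
    and aff0: "\<forall>a b. 0 \<le> a \<and> a < b \<and> {a<..<b} \<inter> S = {} \<longrightarrow>
           (\<forall>z\<in>{a..b}. \<phi> z = \<phi> a + (\<phi> b - \<phi> a) / (b - a) * (z - a))"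
    using assms(2) unfolding PL_def mem_Collect_eq by (elim conjE exE) (rule that)
  define m where "m = Max (insert 0 S)"
  have m0: "0 \<le> m" and mS: "\<And>s. s \<in> S \<Longrightarrow> s \<le> m" using S(1) by (auto simp: m_def)
  define K where "K = \<phi> (m+1) - \<phi> m"
  have step: "\<phi> (z+1) - \<phi> z = K" if z: "m \<le> z" for z
  proof -
    have emp: "{m<..<z+1} \<inter> S = {}" using mS by force
    have A: "\<forall>w\<in>{m..z+1}. \<phi> w = \<phi> m + (\<phi> (z+1) - \<phi> m) / (z + 1 - m) * (w - m)"
      using aff0 m0 emp z by auto
    define Q where "Q = (\<phi> (z+1) - \<phi> m) / (z + 1 - m)"
    have 1: "\<phi> (m+1) = \<phi> m + Q * (m + 1 - m)" using bspec[OF A, of "m+1"] z unfolding Q_def by simp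
    have 2: "\<phi> z = \<phi> m + Q * (z - m)" using bspec[OF A, of "z"] z unfolding Q_def by simp
    have 3: "\<phi> (z+1) = \<phi> m + Q * (z + 1 - m)" using bspec[OF A, of "z+1"] z unfolding Q_def by simp
    have "K = Q" using 1 unfolding K_def by simp
    then show ?thesis using 2 3 by (simp add: algebra_simps)
  qed
  have "right_deriv \<phi> x \<le> K" if x: "0 \<le> x" for x
  proof -
    define z where "z = max x m + 1"
    have xz: "x < z" "m \<le> z" by (auto simp: z_def)
    have "(\<phi> z - \<phi> x) / (z - x) \<le> (\<phi> (z+1) - \<phi> x) / (z + 1 - x)"
      "(\<phi> (z+1) - \<phi> x) / (z + 1 - x) \<le> (\<phi> (z+1) - \<phi> z) / (z + 1 - z)"
      using slope_mono[OF assms(1) x, of z "z+1"] xz by auto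
    then have zK: "(\<phi> z - \<phi> x) / (z - x) \<le> K" using step[OF xz(2)] by simp
    show ?thesis
    proof (rule tendsto_upperbound[OF PL_right_tendsto[OF assms(2) x]])
      have "eventually (\<lambda>y. y \<in> {x<..<z}) (at_right x)" using xz by (intro eventually_at_right_real) simp
      then show "eventually (\<lambda>y. K \<ge> (\<phi> y - \<phi> x) / (y - x)) (at_right x)"
      proof eventually_elim
        case (elim y)
        then have "(\<phi> y - \<phi> x) / (y - x) \<le> (\<phi> z - \<phi> x) / (z - x)"
          using slope_mono[OF assms(1) x, of y z] by auto
        then show ?case using zK by simp
      qed
    qed simp
  qed
  then show ?thesis by blast
qed

lemma phi_bound:
  assumes "\<phi> \<in> Theta" "\<phi> \<in> PL" "\<bar>\<phi> 0\<bar> \<le> sR" "(SUP x\<in>{0..}. right_deriv \<phi> x) \<le> mR" "0 \<le> x"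
  shows "\<phi> x \<le> sR + mR * x"
proof (cases "x = 0")
  case True then show ?thesis using assms(3) by simp
next
  case False
  then have x: "0 < x" using assms(5) by simp
  have cv: "convex_on {0..} \<phi>" using assms(1) by (simp add: Theta_def)
  obtain K where K: "\<forall>x\<ge>0. right_deriv \<phi> x \<le> K" using rd_bdd[OF cv assms(2)] by blast
  have "bdd_above ((\<lambda>x. right_deriv \<phi> x) ` {0..})" using K by (auto intro!: bdd_aboveI2)
  then have "right_deriv \<phi> x \<le> (SUP x\<in>{0..}. right_deriv \<phi> x)" using x by (intro cSUP_upper) auto
  then have "right_deriv \<phi> x \<le> mR" using assms(4) by simp
  then have "(\<phi> x - \<phi> 0) / x \<le> mR" using rd_ge_chord[OF cv assms(2) x] by simp
  then have "\<phi> x - \<phi> 0 \<le> mR * x" using x by (simp add: divide_le_eq)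
  then show ?thesis using assms(3) by simp
qed



lemma hinge_nonneg: "0 \<le> hinge \<tau> x" by (simp add: hinge_def)

lemma hinge_le: "0 \<le> \<tau> \<Longrightarrow> hinge \<tau> x \<le> max x 0" by (simp add: hinge_def)

lemma hinge_convex: "convex_on {0..} (hinge \<tau>)"
proof (rule convex_onI)
  fix t x y :: real assume t: "0 < t" "t < 1"
  have a: "(1 - t) * (x - \<tau>) \<le> (1 - t) * max (x - \<tau>) 0" using t by (intro mult_left_mono) auto
  have b: "t * (y - \<tau>) \<le> t * max (y - \<tau>) 0" using t by (intro mult_left_mono) auto
  have c: "0 \<le> (1 - t) * max (x - \<tau>) 0 + t * max (y - \<tau>) 0" using t by simp
  have "(1 - t) * x + t * y - \<tau> = (1 - t) * (x - \<tau>) + t * (y - \<tau>)" by (simp add: algebra_simps)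
  then show "hinge \<tau> ((1 - t) *\<^sub>R x + t *\<^sub>R y) \<le> (1 - t) * hinge \<tau> x + t * hinge \<tau> y"
    unfolding hinge_def using a b c by simp
qed (simp add: convex_real_interval)

lemma Theta_add:
  assumes "\<theta> \<in> Theta" "0 \<le> t"
  shows "(\<lambda>x. \<theta> x + t * hinge \<tau> x) \<in> Theta"
proof -
  have "convex_on {0..} \<theta>" "mono_on {0..} \<theta>" using assms(1) by (auto simp: Theta_def)
  moreover have "convex_on {0..} (\<lambda>x. t * hinge \<tau> x)" using hinge_convex assms(2) by (intro convex_on_cmul)
  moreover have "mono_on {0..} (\<lambda>x. t * hinge \<tau> x)"
    using assms(2) by (intro mono_onI) (auto simp: hinge_def intro!: mult_left_mono)
  ultimately show ?thesis unfolding Theta_def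
    by (auto intro!: convex_on_add mono_onI add_mono dest: mono_onD)
qed

lemma PL_obtain:
  assumes "v \<in> PL"
  obtains S where "finite S" "S \<subseteq> {0..}"
    "\<And>a b. 0 \<le> a \<Longrightarrow> a < b \<Longrightarrow> {a<..<b} \<inter> S = {} \<Longrightarrow>
           (\<forall>z\<in>{a..b}. v z = v a + (v b - v a) / (b - a) * (z - a))"
proof -
  obtain S where S: "finite S" "S \<subseteq> {0..}"
    and aff0: "\<forall>a b. 0 \<le> a \<and> a < b \<and> {a<..<b} \<inter> S = {} \<longrightarrow>
           (\<forall>z\<in>{a..b}. v z = v a + (v b - v a) / (b - a) * (z - a))"
    using assms unfolding PL_def mem_Collect_eq by (elim conjE exE) (rule that)
  show ?thesis by (rule that[OF S]) (use aff0 in blast)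
qed

lemma PL_cont: "v \<in> PL \<Longrightarrow> continuous_on {0..} v" by (simp add: PL_def)

lemma PL_add:
  assumes "u \<in> PL" "w \<in> PL"
  shows "(\<lambda>x. u x + w x) \<in> PL"
proof -
  obtain S1 where S1: "finite S1" "S1 \<subseteq> {0..}"
    and a1: "\<And>a b. 0 \<le> a \<Longrightarrow> a < b \<Longrightarrow> {a<..<b} \<inter> S1 = {} \<Longrightarrow>
           (\<forall>z\<in>{a..b}. u z = u a + (u b - u a) / (b - a) * (z - a))"
    using PL_obtain[OF assms(1)] by blast
  obtain S2 where S2: "finite S2" "S2 \<subseteq> {0..}"
    and a2: "\<And>a b. 0 \<le> a \<Longrightarrow> a < b \<Longrightarrow> {a<..<b} \<inter> S2 = {} \<Longrightarrow>
           (\<forall>z\<in>{a..b}. w z = w a + (w b - w a) / (b - a) * (z - a))"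
    using PL_obtain[OF assms(2)] by blast
  have "\<forall>z\<in>{a..b}. u z + w z = u a + w a + (u b + w b - (u a + w a)) / (b - a) * (z - a)"
    if ab: "0 \<le> a" "a < b" "{a<..<b} \<inter> (S1 \<union> S2) = {}" for a b
  proof
    fix z assume z: "z \<in> {a..b}"
    have "{a<..<b} \<inter> S1 = {}" "{a<..<b} \<inter> S2 = {}" using ab(3) by auto
    then have eu: "u z = u a + (u b - u a) / (b - a) * (z - a)" and ew: "w z = w a + (w b - w a) / (b - a) * (z - a)"
      using bspec[OF a1[OF ab(1,2)], of z] bspec[OF a2[OF ab(1,2)], of z] z by auto
    have "(u b + w b - (u a + w a)) / (b - a) = (u b - u a) / (b - a) + (w b - w a) / (b - a)"
      by (simp add: add_divide_distrib[symmetric])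
    then show "u z + w z = u a + w a + (u b + w b - (u a + w a)) / (b - a) * (z - a)"
      unfolding eu ew by (simp add: algebra_simps)
  qed
  moreover have "continuous_on {0..} (\<lambda>x. u x + w x)"
    using PL_cont[OF assms(1)] PL_cont[OF assms(2)] by (intro continuous_on_add)
  ultimately show ?thesis unfolding PL_def using S1 S2
    by (intro CollectI conjI exI[of _ "S1 \<union> S2"]) auto
qed

lemma PL_cmul:
  assumes "w \<in> PL"
  shows "(\<lambda>x. c * w x) \<in> PL"
proof -
  obtain S2 where S2: "finite S2" "S2 \<subseteq> {0..}"
    and a2: "\<And>a b. 0 \<le> a \<Longrightarrow> a < b \<Longrightarrow> {a<..<b} \<inter> S2 = {} \<Longrightarrow>
           (\<forall>z\<in>{a..b}. w z = w a + (w b - w a) / (b - a) * (z - a))"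
    using PL_obtain[OF assms(1)] by blast
  have "\<forall>z\<in>{a..b}. c * w z = c * w a + (c * w b - c * w a) / (b - a) * (z - a)"
    if ab: "0 \<le> a" "a < b" "{a<..<b} \<inter> S2 = {}" for a b
  proof
    fix z assume z: "z \<in> {a..b}"
    then have ew: "w z = w a + (w b - w a) / (b - a) * (z - a)"
      using bspec[OF a2[OF ab(1,2,3)], of z] by auto
    show "c * w z = c * w a + (c * w b - c * w a) / (b - a) * (z - a)"
    proof -
      have q: "(c * w b - c * w a) / (b - a) = c * ((w b - w a) / (b - a))" by (simp add: right_diff_distrib)
      show ?thesis unfolding ew q by (simp add: distrib_left)
    qed
  qed
  moreover have "continuous_on {0..} (\<lambda>x. c * w x)"
    using PL_cont[OF assms(1)] by (intro continuous_on_mult continuous_on_const)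
  ultimately show ?thesis unfolding PL_def using S2
    by (intro CollectI conjI exI[of _ "S2"]) auto
qed

lemma hinge_PL:
  assumes "0 \<le> \<tau>"
  shows "hinge \<tau> \<in> PL"
proof -
  have "\<forall>z\<in>{a..b}. hinge \<tau> z = hinge \<tau> a + (hinge \<tau> b - hinge \<tau> a) / (b - a) * (z - a)"
    if ab: "0 \<le> a" "a < b" "{a<..<b} \<inter> {\<tau>} = {}" for a b
  proof
    fix z assume z: "z \<in> {a..b}"
    have "\<tau> \<le> a \<or> b \<le> \<tau>" using ab(3) by (cases "\<tau> \<le> a") auto
    then show "hinge \<tau> z = hinge \<tau> a + (hinge \<tau> b - hinge \<tau> a) / (b - a) * (z - a)"
    proof
      assume "\<tau> \<le> a"
      then have "hinge \<tau> z = z - \<tau>" "hinge \<tau> a = a - \<tau>" "hinge \<tau> b = b - \<tau>" using z ab by (auto simp: hinge_def)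
      then show ?thesis using ab by simp
    next
      assume "b \<le> \<tau>"
      then have "hinge \<tau> z = 0" "hinge \<tau> a = 0" "hinge \<tau> b = 0" using z ab by (auto simp: hinge_def)
      then show ?thesis by simp
    qed
  qed
  moreover have "continuous_on {0..} (hinge \<tau>)" unfolding hinge_def by (intro continuous_intros)
  ultimately show ?thesis unfolding PL_def using assms
    by (intro CollectI conjI exI[of _ "{\<tau>}"]) auto
qed



lemma hinge_LR:
  assumes "0 < x" "x \<noteq> \<tau>" "0 \<le> \<tau>"
  shows "left_deriv (hinge \<tau>) x = right_deriv (hinge \<tau>) x"
proof (cases "x < \<tau>")
  case True
  have "left_deriv (hinge \<tau>) x = 0"
    by (rule quot_left(2)[of x]) (use assms True in \<open>auto simp: hinge_def\<close>)
  moreover have "right_deriv (hinge \<tau>) x = 0"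
    by (rule quot_right(2)[of "\<tau> - x"]) (use assms True in \<open>auto simp: hinge_def\<close>)
  ultimately show ?thesis by simp
next
  case False
  then have xt: "\<tau> < x" using assms(2) by simp
  have "left_deriv (hinge \<tau>) x = 1"
    by (rule quot_left(2)[of "x - \<tau>"]) (use assms xt in \<open>auto simp: hinge_def\<close>)
  moreover have "right_deriv (hinge \<tau>) x = 1"
    by (rule quot_right(2)[of 1]) (use assms xt in \<open>auto simp: hinge_def\<close>)
  ultimately show ?thesis by simp
qed

lemma quot_split:
  fixes \<theta> V :: "real \<Rightarrow> real"
  shows "((\<theta> y + t * V y) - (\<theta> x + t * V x)) / (y - x) = (\<theta> y - \<theta> x) / (y - x) + t * ((V y - V x) / (y - x))"
proof -
  have "((\<theta> y + t * V y) - (\<theta> x + t * V x)) = (\<theta> y - \<theta> x) + t * (V y - V x)" by (simp add: algebra_simps)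
  then have "((\<theta> y + t * V y) - (\<theta> x + t * V x)) / (y - x) = ((\<theta> y - \<theta> x) + t * (V y - V x)) / (y - x)"
    by (rule arg_cong)
  also have "\<dots> = (\<theta> y - \<theta> x) / (y - x) + t * (V y - V x) / (y - x)" by (rule add_divide_distrib)
  finally show ?thesis by simp
qed

lemma left_deriv_eq: "((\<lambda>y. (v y - v x) / (y - x)) \<longlongrightarrow> l) (at_left x) \<Longrightarrow> left_deriv v x = l"
  unfolding left_deriv_def by (rule tendsto_Lim) simp_all

lemma right_deriv_eq: "((\<lambda>y. (v y - v x) / (y - x)) \<longlongrightarrow> l) (at_right x) \<Longrightarrow> right_deriv v x = l"
  unfolding right_deriv_def by (rule tendsto_Lim) simp_all

lemma bp_sub:
  assumes "\<theta> \<in> PL" "0 \<le> \<tau>"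
  shows "breakpoints (\<lambda>x. \<theta> x + t * hinge \<tau> x) \<subseteq> breakpoints \<theta> \<union> {\<tau>}"
proof
  fix x assume "x \<in> breakpoints (\<lambda>x. \<theta> x + t * hinge \<tau> x)"
  then have x: "0 < x" and ne: "left_deriv (\<lambda>x. \<theta> x + t * hinge \<tau> x) x \<noteq> right_deriv (\<lambda>x. \<theta> x + t * hinge \<tau> x) x"
    by (auto simp: breakpoints_def)
  show "x \<in> breakpoints \<theta> \<union> {\<tau>}"
  proof (rule ccontr)
    assume "x \<notin> breakpoints \<theta> \<union> {\<tau>}"
    then have e1: "left_deriv \<theta> x = right_deriv \<theta> x" and xt: "x \<noteq> \<tau>" using x by (auto simp: breakpoints_def)
    have VP: "hinge \<tau> \<in> PL" by (rule hinge_PL[OF assms(2)])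
    have L: "((\<lambda>y. ((\<theta> y + t * hinge \<tau> y) - (\<theta> x + t * hinge \<tau> x)) / (y - x)) \<longlongrightarrow>
        left_deriv \<theta> x + t * left_deriv (hinge \<tau>) x) (at_left x)"
      unfolding quot_split by (intro tendsto_intros PL_left_tendsto assms(1) VP x)
    have R: "((\<lambda>y. ((\<theta> y + t * hinge \<tau> y) - (\<theta> x + t * hinge \<tau> x)) / (y - x)) \<longlongrightarrow>
        right_deriv \<theta> x + t * right_deriv (hinge \<tau>) x) (at_right x)"
      unfolding quot_split using x by (intro tendsto_intros PL_right_tendsto assms(1) VP) auto
    have "left_deriv (\<lambda>x. \<theta> x + t * hinge \<tau> x) x = left_deriv \<theta> x + t * left_deriv (hinge \<tau>) x"
      by (rule left_deriv_eq[OF L])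
    moreover have "right_deriv (\<lambda>x. \<theta> x + t * hinge \<tau> x) x = right_deriv \<theta> x + t * right_deriv (hinge \<tau>) x"
      by (rule right_deriv_eq[OF R])
    ultimately show False using ne e1 hinge_LR[OF x xt assms(2)] by simp
  qed
qed

lemma phi_mem:
  assumes "\<theta> \<in> Theta \<inter> PL" "0 \<le> \<tau>" "0 \<le> t"
  shows "(\<lambda>x. \<theta> x + t * hinge \<tau> x) \<in> Theta \<inter> PL_on (breakpoints \<theta> \<union> {\<tau>})"
proof -
  have "(\<lambda>x. \<theta> x + t * hinge \<tau> x) \<in> PL"
    using assms by (intro PL_add PL_cmul hinge_PL) auto
  then show ?thesis using Theta_add[of \<theta> t \<tau>] bp_sub[of \<theta> \<tau> t] assms by (auto simp: PL_on_def)
qed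



lemma exp_taylor_up:
  fixes b :: real assumes "0 \<le> b"
  shows "exp b \<le> 1 + b + b\<^sup>2 / 2 * exp b"
proof (cases "b = 0")
  case True then show ?thesis by simp
next
  case False
  obtain u where u: "0 < \<bar>u\<bar>" "\<bar>u\<bar> < \<bar>b\<bar>"
    and e: "exp b = (\<Sum>m<2. b ^ m / fact m) + exp u / fact 2 * b ^ 2"
    using Maclaurin_exp_lt[OF False, of 2] by auto
  have s: "(\<Sum>m<2. b ^ m / fact m) = 1 + b" by (simp add: numeral_2_eq_2)
  have "u < b" using u assms by linarith
  then have "exp u \<le> exp b" by simp
  then have "exp u / 2 * b\<^sup>2 \<le> exp b / 2 * b\<^sup>2" by (intro mult_right_mono) auto
  then show ?thesis using e s by (simp add: algebra_simps)
qed

lemma exp_taylor_up2: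
  fixes a b :: real assumes "0 \<le> b"
  shows "exp (a + b) \<le> exp a + b * exp a + b\<^sup>2 / 2 * exp (a + b)"
proof -
  have "exp a * exp b \<le> exp a * (1 + b + b\<^sup>2 / 2 * exp b)"
    using exp_taylor_up[OF assms] by (intro mult_left_mono) auto
  then show ?thesis by (simp add: exp_add algebra_simps)
qed

lemma exp_lin_low:
  fixes a b :: real
  shows "exp a + b * exp a \<le> exp (a + b)"
proof -
  have "exp a * (1 + b) \<le> exp a * exp b" by (intro mult_left_mono exp_ge_add_one_self) auto
  then show ?thesis by (simp add: exp_add algebra_simps)
qed

lemma exp_step:
  fixes a b :: real
  shows "exp (a + b) - exp a \<le> b * exp (a + b)"
proof -
  have "exp (a + b) * (1 + - b) \<le> exp (a + b) * exp (- b)" by (intro mult_left_mono exp_ge_add_one_self) auto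
  also have "\<dots> = exp a" by (simp add: exp_add[symmetric])
  finally show ?thesis by (simp add: algebra_simps)
qed

lemma Lobj_cong:
  assumes "continuous_on {0..} f" "\<forall>x\<in>set xs. x \<ge> 0" "\<And>x. 0 \<le> x \<Longrightarrow> \<phi> x = \<psi> x"
  shows "Lobj f xs \<phi> = Lobj f xs \<psi>"
proof -
  have "map \<phi> xs = map \<psi> xs" using assms(2,3) by (intro map_cong) auto
  moreover have "(\<integral>\<^sup>+ x. ennreal (exp (\<phi> x)) \<partial>dens_measure f) = (\<integral>\<^sup>+ x. ennreal (exp (\<psi> x)) \<partial>dens_measure f)"
  proof (rule nn_integral_cong_AE)
    show "AE x in dens_measure f. ennreal (exp (\<phi> x)) = ennreal (exp (\<psi> x))"
      using dens_AE[OF assms(1)] by eventually_elim (simp add: assms(3))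
  qed
  ultimately show ?thesis unfolding Lobj_def by metis
qed

lemma Lobj_real:
  assumes "integrable (dens_measure f) (\<lambda>x. exp (u x))"
  shows "Lobj f xs u = ereal (sum_list (map u xs) / real (length xs) - (\<integral>x. exp (u x) \<partial>dens_measure f) + 1)"
proof -
  have "(\<integral>\<^sup>+ x. ennreal (exp (u x)) \<partial>dens_measure f) = ennreal (\<integral>x. exp (u x) \<partial>dens_measure f)"
    using assms by (intro nn_integral_eq_integral) auto
  moreover have "0 \<le> (\<integral>x. exp (u x) \<partial>dens_measure f)" by (intro integral_nonneg_AE) auto
  ultimately have "enn2ereal (\<integral>\<^sup>+ x. ennreal (exp (u x)) \<partial>dens_measure f) = ereal (\<integral>x. exp (u x) \<partial>dens_measure f)"
    by simp
  then show ?thesis by (simp add: Lobj_def)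
qed



lemma hinge_meas[measurable]: "hinge \<tau> \<in> borel_measurable borel"
  unfolding hinge_def by measurable

lemma meas_dens: "g \<in> borel_measurable borel \<Longrightarrow> g \<in> borel_measurable (dens_measure f)" by simp

lemma nb: "0 \<le> (y::real) \<Longrightarrow> y \<le> e \<Longrightarrow> norm y \<le> norm e" by simp

lemma taylor_int:
  fixes \<theta>0 E :: "real \<Rightarrow> real"
  assumes fc: "continuous_on {0..} f" and th: "continuous_on UNIV \<theta>0" and tau: "0 \<le> \<tau>" and t: "0 \<le> t"
    and Em: "E \<in> borel_measurable borel"
    and iE: "integrable (dens_measure f) E"
    and iE1: "integrable (dens_measure f) (\<lambda>x. x * E x)"
    and iE2: "integrable (dens_measure f) (\<lambda>x. x\<^sup>2 * E x)"
    and bd: "AE x in dens_measure f. exp (\<theta>0 x + t * hinge \<tau> x) \<le> E x"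
  shows "integrable (dens_measure f) (\<lambda>x. exp (\<theta>0 x + t * hinge \<tau> x))"
    and "integrable (dens_measure f) (\<lambda>x. exp (\<theta>0 x))"
    and "integrable (dens_measure f) (\<lambda>x. hinge \<tau> x * exp (\<theta>0 x))"
    and "(\<integral>x. exp (\<theta>0 x) \<partial>dens_measure f) + t * (\<integral>x. hinge \<tau> x * exp (\<theta>0 x) \<partial>dens_measure f)
          \<le> (\<integral>x. exp (\<theta>0 x + t * hinge \<tau> x) \<partial>dens_measure f)"
    and "(\<integral>x. exp (\<theta>0 x + t * hinge \<tau> x) \<partial>dens_measure f) \<le>
          (\<integral>x. exp (\<theta>0 x) \<partial>dens_measure f) + t * (\<integral>x. hinge \<tau> x * exp (\<theta>0 x) \<partial>dens_measure f)
          + t\<^sup>2 / 2 * (\<integral>x. x\<^sup>2 * E x \<partial>dens_measure f)"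
proof -
  let ?M = "dens_measure f"
  note [measurable] = borel_measurable_continuous_onI[OF th] Em
  have AE0: "AE x in ?M. 0 \<le> x" by (rule dens_AE[OF fc])
  show i1: "integrable ?M (\<lambda>x. exp (\<theta>0 x + t * hinge \<tau> x))"
  proof (rule Bochner_Integration.integrable_bound[OF iE])
    show "(\<lambda>x. exp (\<theta>0 x + t * hinge \<tau> x)) \<in> borel_measurable ?M" by (rule meas_dens) measurable
    show "AE x in ?M. norm (exp (\<theta>0 x + t * hinge \<tau> x)) \<le> norm (E x)"
      using bd by eventually_elim (rule nb, auto)
  qed
  have le0: "exp (\<theta>0 x) \<le> exp (\<theta>0 x + t * hinge \<tau> x)" for x
    using t by (simp add: hinge_nonneg)
  show i2: "integrable ?M (\<lambda>x. exp (\<theta>0 x))"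
  proof (rule Bochner_Integration.integrable_bound[OF iE])
    show "(\<lambda>x. exp (\<theta>0 x)) \<in> borel_measurable ?M" by (rule meas_dens) measurable
    show "AE x in ?M. norm (exp (\<theta>0 x)) \<le> norm (E x)"
      using bd by eventually_elim (rule nb, simp, rule order_trans[OF le0], simp)
  qed
  have "AE x in ?M. norm (hinge \<tau> x * exp (\<theta>0 x)) \<le> norm (x * E x)"
    using AE0 bd
  proof eventually_elim
    case (elim x)
    have "hinge \<tau> x \<le> x" using hinge_le[OF tau, of x] elim by simp
    then have "hinge \<tau> x * exp (\<theta>0 x) \<le> x * E x"
      using order_trans[OF le0[of x]] elim by (intro mult_mono) (auto simp: hinge_nonneg)
    then show ?case by (simp add: hinge_nonneg)
  qed
  then show i3: "integrable ?M (\<lambda>x. hinge \<tau> x * exp (\<theta>0 x))"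
    by (intro Bochner_Integration.integrable_bound[OF iE1] meas_dens) measurable
  have "(\<integral>x. exp (\<theta>0 x) + t * (hinge \<tau> x * exp (\<theta>0 x)) \<partial>?M) \<le> (\<integral>x. exp (\<theta>0 x + t * hinge \<tau> x) \<partial>?M)"
  proof (rule integral_mono_AE)
    show "integrable ?M (\<lambda>x. exp (\<theta>0 x) + t * (hinge \<tau> x * exp (\<theta>0 x)))" using i2 i3 by auto
    show "integrable ?M (\<lambda>x. exp (\<theta>0 x + t * hinge \<tau> x))" by (rule i1)
    show "AE x in ?M. exp (\<theta>0 x) + t * (hinge \<tau> x * exp (\<theta>0 x)) \<le> exp (\<theta>0 x + t * hinge \<tau> x)"
      using exp_lin_low[of "\<theta>0 _" "t * hinge \<tau> _"] by (auto intro!: AE_I2 simp: mult.assoc)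
  qed
  then show "(\<integral>x. exp (\<theta>0 x) \<partial>?M) + t * (\<integral>x. hinge \<tau> x * exp (\<theta>0 x) \<partial>?M)
          \<le> (\<integral>x. exp (\<theta>0 x + t * hinge \<tau> x) \<partial>?M)"
    using i2 i3 by simp
  have "(\<integral>x. exp (\<theta>0 x + t * hinge \<tau> x) \<partial>?M) \<le>
     (\<integral>x. exp (\<theta>0 x) + t * (hinge \<tau> x * exp (\<theta>0 x)) + t\<^sup>2 / 2 * (x\<^sup>2 * E x) \<partial>?M)"
  proof (rule integral_mono_AE)
    show "integrable ?M (\<lambda>x. exp (\<theta>0 x) + t * (hinge \<tau> x * exp (\<theta>0 x)) + t\<^sup>2 / 2 * (x\<^sup>2 * E x))"
      using i2 i3 iE2 by auto
    show "integrable ?M (\<lambda>x. exp (\<theta>0 x + t * hinge \<tau> x))" by (rule i1)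
    show "AE x in ?M. exp (\<theta>0 x + t * hinge \<tau> x) \<le> exp (\<theta>0 x) + t * (hinge \<tau> x * exp (\<theta>0 x)) + t\<^sup>2 / 2 * (x\<^sup>2 * E x)"
      using AE0 bd
    proof eventually_elim
      case (elim x)
      have h0: "0 \<le> t * hinge \<tau> x" using t by (simp add: hinge_nonneg)
      have hx: "hinge \<tau> x \<le> x" using hinge_le[OF tau, of x] elim by simp
      have "(t * hinge \<tau> x)\<^sup>2 \<le> (t * x)\<^sup>2"
        using h0 hx t by (intro power_mono mult_left_mono) auto
      then have "(t * hinge \<tau> x)\<^sup>2 / 2 * exp (\<theta>0 x + t * hinge \<tau> x) \<le> (t * x)\<^sup>2 / 2 * E x"
        using elim by (intro mult_mono divide_right_mono) auto
      then have "(t * hinge \<tau> x)\<^sup>2 / 2 * exp (\<theta>0 x + t * hinge \<tau> x) \<le> t\<^sup>2 / 2 * (x\<^sup>2 * E x)"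
        by (simp add: power_mult_distrib)
      then show ?case using exp_taylor_up2[OF h0, of "\<theta>0 x"] by (simp add: mult.assoc)
    qed
  qed
  then show "(\<integral>x. exp (\<theta>0 x + t * hinge \<tau> x) \<partial>?M) \<le>
          (\<integral>x. exp (\<theta>0 x) \<partial>?M) + t * (\<integral>x. hinge \<tau> x * exp (\<theta>0 x) \<partial>?M)
          + t\<^sup>2 / 2 * (\<integral>x. x\<^sup>2 * E x \<partial>?M)"
    using i2 i3 iE2 by simp
qed

lemma step_int:
  fixes \<theta>0 E :: "real \<Rightarrow> real"
  assumes fc: "continuous_on {0..} f" and th: "continuous_on UNIV \<theta>0" and tau: "0 \<le> \<tau>" and t: "0 \<le> t" "t \<le> s"
    and Em: "E \<in> borel_measurable borel"
    and iE: "integrable (dens_measure f) E"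
    and iE1: "integrable (dens_measure f) (\<lambda>x. x * E x)"
    and bd: "AE x in dens_measure f. exp (\<theta>0 x + s * hinge \<tau> x) \<le> E x"
  shows "integrable (dens_measure f) (\<lambda>x. exp (\<theta>0 x + s * hinge \<tau> x))"
    and "(\<integral>x. exp (\<theta>0 x + s * hinge \<tau> x) \<partial>dens_measure f) \<le>
          (\<integral>x. exp (\<theta>0 x + t * hinge \<tau> x) \<partial>dens_measure f) + (s - t) * (\<integral>x. x * E x \<partial>dens_measure f)"
proof -
  let ?M = "dens_measure f"
  note [measurable] = borel_measurable_continuous_onI[OF th] Em
  have AE0: "AE x in ?M. 0 \<le> x" by (rule dens_AE[OF fc])
  show i1: "integrable ?M (\<lambda>x. exp (\<theta>0 x + s * hinge \<tau> x))"
  proof (rule Bochner_Integration.integrable_bound[OF iE])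
    show "(\<lambda>x. exp (\<theta>0 x + s * hinge \<tau> x)) \<in> borel_measurable ?M" by (rule meas_dens) measurable
    show "AE x in ?M. norm (exp (\<theta>0 x + s * hinge \<tau> x)) \<le> norm (E x)"
      using bd by eventually_elim (rule nb, auto)
  qed
  have le0: "exp (\<theta>0 x + t * hinge \<tau> x) \<le> exp (\<theta>0 x + s * hinge \<tau> x)" for x
    using t by (simp add: hinge_nonneg mult_right_mono)
  have i2: "integrable ?M (\<lambda>x. exp (\<theta>0 x + t * hinge \<tau> x))"
  proof (rule Bochner_Integration.integrable_bound[OF iE])
    show "(\<lambda>x. exp (\<theta>0 x + t * hinge \<tau> x)) \<in> borel_measurable ?M" by (rule meas_dens) measurable
    show "AE x in ?M. norm (exp (\<theta>0 x + t * hinge \<tau> x)) \<le> norm (E x)"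
      using bd by eventually_elim (rule nb, simp, rule order_trans[OF le0], simp)
  qed
  have "(\<integral>x. exp (\<theta>0 x + s * hinge \<tau> x) \<partial>?M) \<le> (\<integral>x. exp (\<theta>0 x + t * hinge \<tau> x) + (s - t) * (x * E x) \<partial>?M)"
  proof (rule integral_mono_AE)
    show "integrable ?M (\<lambda>x. exp (\<theta>0 x + t * hinge \<tau> x) + (s - t) * (x * E x))" using i2 iE1 by auto
    show "integrable ?M (\<lambda>x. exp (\<theta>0 x + s * hinge \<tau> x))" by (rule i1)
    show "AE x in ?M. exp (\<theta>0 x + s * hinge \<tau> x) \<le> exp (\<theta>0 x + t * hinge \<tau> x) + (s - t) * (x * E x)"
      using AE0 bd
    proof eventually_elim
      case (elim x)
      have e: "\<theta>0 x + s * hinge \<tau> x = (\<theta>0 x + t * hinge \<tau> x) + (s - t) * hinge \<tau> x" by (simp add: algebra_simps)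
      have hx: "hinge \<tau> x \<le> x" using hinge_le[OF tau, of x] elim by simp
      have "(s - t) * hinge \<tau> x * exp (\<theta>0 x + s * hinge \<tau> x) \<le> (s - t) * x * E x"
        using elim hx t by (intro mult_mono) (auto simp: hinge_nonneg)
      then show ?case using exp_step[of "\<theta>0 x + t * hinge \<tau> x" "(s - t) * hinge \<tau> x"] unfolding e[symmetric]
        by (simp add: mult.assoc)
    qed
  qed
  then show "(\<integral>x. exp (\<theta>0 x + s * hinge \<tau> x) \<partial>?M) \<le>
          (\<integral>x. exp (\<theta>0 x + t * hinge \<tau> x) \<partial>?M) + (s - t) * (\<integral>x. x * E x \<partial>?M)"
    using i2 iE1 by simp
qed



lemma sum_list_lin:
  "sum_list (map (\<lambda>x. g x + t * h x) xs) = sum_list (map g xs) + (t::real) * sum_list (map h xs)"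
  by (induction xs) (simp_all add: algebra_simps)

locale ctx =
  fixes f :: "real \<Rightarrow> real" and \<beta> :: real and xs :: "real list" and sR mR \<tau> :: real and \<theta> :: "real \<Rightarrow> real"
  assumes fc: "continuous_on {0..} f"
    and A2: "\<forall>l::real. (\<integral>\<^sup>+ x. ennreal (exp (l * x)) \<partial>dens_measure f) < \<infinity> \<longleftrightarrow> l < \<beta>"
    and A3: "\<forall>l::real. (\<integral>\<^sup>+ x. ennreal (exp (l * x)) \<partial>dens_measure f) < \<infinity> \<longrightarrow>
               (\<integral>\<^sup>+ x. ennreal (x\<^sup>2 * exp (l * x)) \<partial>dens_measure f) < \<infinity>"
    and data_nonneg: "\<forall>x\<in>set xs. x \<ge> 0"
    and prev_mem: "\<theta> \<in> Theta \<inter> PL"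
    and tau_nonneg: "\<tau> \<ge> 0"
    and mR_lt: "mR < \<beta>"
    and bnd: "\<forall>\<phi>\<in>Theta. Lobj f xs \<phi> \<ge> Lobj f xs \<theta> \<longrightarrow>
          \<bar>\<phi> 0\<bar> \<le> sR \<and> (SUP x\<in>{0..}. right_deriv \<phi> x) \<le> mR"
begin

abbreviation "M \<equiv> dens_measure f"
definition "\<theta>0 = (\<lambda>x. \<theta> (max x 0))"
definition "\<phi> t = (\<lambda>x. \<theta> x + t * hinge \<tau> x)"
definition "mth = sum_list (map \<theta> xs) / real (length xs)"
definition "mV = sum_list (map (hinge \<tau>) xs) / real (length xs)"
definition "H t = (\<integral>x. exp (\<theta>0 x + t * hinge \<tau> x) \<partial>M)"
definition "G t = mth + t * mV - H t + 1"
definition "J = (\<integral>x. hinge \<tau> x * exp (\<theta>0 x) \<partial>M)"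
definition "D = mV - J"
definition "\<delta> = (\<beta> - mR) / 2"
definition "E0 x = exp (sR + mR * x)"
definition "Ed x = exp (sR + (mR + \<delta>) * x)"
definition "C1 = (\<integral>x. x * Ed x \<partial>M)"
definition "C2 = (\<integral>x. x\<^sup>2 * Ed x \<partial>M)"
definition "\<gamma>0 = (\<integral>x. x\<^sup>2 * E0 x \<partial>M)"

lemma delta_pos: "\<delta> > 0" using mR_lt by (simp add: \<delta>_def)
lemma ld_lt: "mR + \<delta> < \<beta>" using mR_lt unfolding \<delta>_def by (simp add: field_simps)

lemma th0c: "continuous_on UNIV \<theta>0"
  unfolding \<theta>0_def using prev_mem by (intro cont_max0 PL_cont) auto

lemma AE0: "AE x in M. 0 \<le> x" by (rule dens_AE[OF fc])

lemma E0_int: "E0 \<in> borel_measurable borel" "integrable M E0" "integrable M (\<lambda>x. x * E0 x)" "integrable M (\<lambda>x. x\<^sup>2 * E0 x)"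
  unfolding E0_def using int_exp_gen[OF A2 A3 mR_lt] by (auto)

lemma Ed_int: "Ed \<in> borel_measurable borel" "integrable M Ed" "integrable M (\<lambda>x. x * Ed x)" "integrable M (\<lambda>x. x\<^sup>2 * Ed x)"
  unfolding Ed_def using int_exp_gen[OF A2 A3 ld_lt] by (auto)

lemma C1_nonneg: "0 \<le> C1"
  unfolding C1_def Ed_def using AE0 by (intro integral_nonneg_AE) (auto elim!: eventually_mono)

lemma C2_nonneg: "0 \<le> C2"
  unfolding C2_def Ed_def by (intro integral_nonneg_AE) auto

lemma g0_nonneg: "0 \<le> \<gamma>0"
  unfolding \<gamma>0_def E0_def by (intro integral_nonneg_AE) auto

lemma mV_nonneg: "0 \<le> mV"
  unfolding mV_def by (intro divide_nonneg_nonneg sum_list_nonneg) (auto simp: hinge_nonneg)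

lemma lobj_eq: "Lobj f xs (\<phi> t) = Lobj f xs (\<lambda>x. \<theta>0 x + t * hinge \<tau> x)"
  by (rule Lobj_cong[OF fc data_nonneg]) (simp add: \<phi>_def \<theta>0_def)

lemma mean_eq: "sum_list (map (\<lambda>x. \<theta>0 x + t * hinge \<tau> x) xs) / real (length xs) = mth + t * mV"
proof -
  have "map \<theta>0 xs = map \<theta> xs" using data_nonneg by (intro map_cong) (auto simp: \<theta>0_def)
  then have "sum_list (map \<theta>0 xs) = sum_list (map \<theta> xs)" by metis
  then show ?thesis unfolding sum_list_lin mth_def mV_def by (simp add: add_divide_distrib)
qed

lemma lobj_G:
  assumes "integrable M (\<lambda>x. exp (\<theta>0 x + t * hinge \<tau> x))"
  shows "Lobj f xs (\<phi> t) = ereal (G t)"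
  unfolding lobj_eq Lobj_real[OF assms] mean_eq G_def H_def by simp

lemma phi0: "\<phi> 0 = \<theta>" by (simp add: \<phi>_def)

lemma phi_in: "0 \<le> t \<Longrightarrow> \<phi> t \<in> Theta \<inter> PL_on (breakpoints \<theta> \<union> {\<tau>})"
  unfolding \<phi>_def by (rule phi_mem[OF prev_mem tau_nonneg])

lemma phi_bnd:
  assumes "0 \<le> t" "Lobj f xs \<theta> \<le> Lobj f xs (\<phi> t)" "0 \<le> x"
  shows "\<phi> t x \<le> sR + mR * x"
proof -
  have m: "\<phi> t \<in> Theta" "\<phi> t \<in> PL" using phi_in[OF assms(1)] by (auto simp: PL_on_def)
  then have "\<bar>\<phi> t 0\<bar> \<le> sR \<and> (SUP x\<in>{0..}. right_deriv (\<phi> t) x) \<le> mR" using bnd assms(2) by blast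
  then show ?thesis using phi_bound[OF m] assms(3) by blast
qed

lemma theta_bnd: "0 \<le> x \<Longrightarrow> \<theta> x \<le> sR + mR * x"
  using phi_bnd[of 0 x] by (simp add: phi0)

end



context ctx begin

lemma H0: "H 0 = (\<integral>x. exp (\<theta>0 x) \<partial>M)" by (simp add: H_def)

lemma K1:
  assumes t: "0 \<le> t" and P: "Lobj f xs \<theta> \<le> Lobj f xs (\<phi> t)"
  shows "integrable M (\<lambda>x. exp (\<theta>0 x + t * hinge \<tau> x))" "Lobj f xs (\<phi> t) = ereal (G t)"
    "G 0 + t * D - t\<^sup>2 / 2 * \<gamma>0 \<le> G t"
proof -
  have bd: "AE x in M. exp (\<theta>0 x + t * hinge \<tau> x) \<le> E0 x"
    using AE0
  proof eventually_elim
    case (elim x)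
    have "\<theta>0 x + t * hinge \<tau> x = \<phi> t x" using elim by (simp add: \<theta>0_def \<phi>_def)
    then show ?case using phi_bnd[OF t P elim] by (simp add: E0_def)
  qed
  note T = taylor_int[OF fc th0c tau_nonneg t E0_int bd]
  show "integrable M (\<lambda>x. exp (\<theta>0 x + t * hinge \<tau> x))" by (rule T(1))
  then show "Lobj f xs (\<phi> t) = ereal (G t)" by (rule lobj_G)
  show "G 0 + t * D - t\<^sup>2 / 2 * \<gamma>0 \<le> G t"
    using T(5) unfolding G_def D_def H_def[symmetric] H0[symmetric] J_def[symmetric] \<gamma>0_def[symmetric]
    by (simp add: algebra_simps)
qed

lemma K2:
  assumes s: "0 \<le> s" "s \<le> \<delta>"
  shows "integrable M (\<lambda>x. exp (\<theta>0 x + s * hinge \<tau> x))" "Lobj f xs (\<phi> s) = ereal (G s)"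
    "G 0 + s * D - s\<^sup>2 / 2 * C2 \<le> G s" "G s \<le> G 0 + s * D"
proof -
  have bd: "AE x in M. exp (\<theta>0 x + s * hinge \<tau> x) \<le> Ed x"
    using AE0
  proof eventually_elim
    case (elim x)
    have "\<theta>0 x \<le> sR + mR * x" using theta_bnd[OF elim] elim by (simp add: \<theta>0_def)
    moreover have "s * hinge \<tau> x \<le> \<delta> * x"
      using s elim hinge_le[OF tau_nonneg, of x] by (intro mult_mono) (auto simp: hinge_nonneg)
    ultimately show ?case by (simp add: Ed_def algebra_simps)
  qed
  note T = taylor_int[OF fc th0c tau_nonneg s(1) Ed_int bd]
  show "integrable M (\<lambda>x. exp (\<theta>0 x + s * hinge \<tau> x))" by (rule T(1))
  then show "Lobj f xs (\<phi> s) = ereal (G s)" by (rule lobj_G)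
  show "G 0 + s * D - s\<^sup>2 / 2 * C2 \<le> G s"
    using T(5) unfolding G_def D_def H_def[symmetric] H0[symmetric] J_def[symmetric] C2_def[symmetric]
    by (simp add: algebra_simps)
  show "G s \<le> G 0 + s * D"
    using T(4) unfolding G_def D_def H_def[symmetric] H0[symmetric] J_def[symmetric]
    by (simp add: algebra_simps)
qed

lemma K3:
  assumes t: "0 \<le> t" and P: "Lobj f xs \<theta> \<le> Lobj f xs (\<phi> t)" and s: "t \<le> s" "s \<le> t + \<delta>"
  shows "Lobj f xs (\<phi> s) = ereal (G s)" "G t - (s - t) * C1 \<le> G s"
proof -
  have bd: "AE x in M. exp (\<theta>0 x + s * hinge \<tau> x) \<le> Ed x"
    using AE0
  proof eventually_elim
    case (elim x)
    have "\<theta>0 x + t * hinge \<tau> x = \<phi> t x" using elim by (simp add: \<theta>0_def \<phi>_def)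
    then have "\<theta>0 x + t * hinge \<tau> x \<le> sR + mR * x" using phi_bnd[OF t P elim] by simp
    moreover have "(s - t) * hinge \<tau> x \<le> \<delta> * x"
      using s elim hinge_le[OF tau_nonneg, of x] by (intro mult_mono) (auto simp: hinge_nonneg)
    ultimately have "\<theta>0 x + s * hinge \<tau> x \<le> sR + (mR + \<delta>) * x" by (simp add: algebra_simps)
    then show ?case by (simp add: Ed_def)
  qed
  note T = step_int[OF fc th0c tau_nonneg t s(1) Ed_int(1,2,3) bd]
  show "Lobj f xs (\<phi> s) = ereal (G s)" by (rule lobj_G[OF T(1)])
  have "0 \<le> (s - t) * mV" using s mV_nonneg by simp
  then show "G t - (s - t) * C1 \<le> G s"
    using T(2) unfolding G_def H_def[symmetric] C1_def[symmetric]
    by (simp add: algebra_simps)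
qed

lemma DL_eq: "DL f xs \<theta> (hinge \<tau>) = ereal D"
proof -
  define q where "q t = (G t - G 0) / t" for t
  have ev: "eventually (\<lambda>t. t \<in> {0<..<\<delta>}) (at_right (0::real))"
    using delta_pos by (intro eventually_at_right_real)
  have lo: "eventually (\<lambda>t. D - t * (C2 / 2) \<le> q t) (at_right 0)"
    using ev
  proof eventually_elim
    case (elim t)
    then have "G 0 + t * D - t\<^sup>2 / 2 * C2 \<le> G t" using K2(3)[of t] by auto
    then have "t * (D - t * (C2 / 2)) \<le> G t - G 0" by (simp add: algebra_simps power2_eq_square)
    then show ?case using elim unfolding q_def by (simp add: le_divide_eq mult.commute)
  qed
  have up: "eventually (\<lambda>t. q t \<le> D) (at_right 0)"
    using ev
  proof eventually_elim
    case (elim t)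
    then have "G t - G 0 \<le> t * D" using K2(4)[of t] by auto
    then show ?case using elim unfolding q_def by (simp add: divide_le_eq mult.commute)
  qed
  have "((\<lambda>t. D - t * (C2 / 2)) \<longlongrightarrow> D - 0 * (C2 / 2)) (at_right 0)"
    by (intro tendsto_intros)
  then have l1: "((\<lambda>t. D - t * (C2 / 2)) \<longlongrightarrow> D) (at_right 0)" by simp
  have "(q \<longlongrightarrow> D) (at_right 0)"
    by (rule tendsto_sandwich[OF lo up l1 tendsto_const])
  then have "((\<lambda>t. ereal (q t)) \<longlongrightarrow> ereal D) (at_right 0)" by simp
  moreover have "eventually (\<lambda>t. ereal (q t) = (Lobj f xs (\<lambda>x. \<theta> x + t * hinge \<tau> x) - Lobj f xs \<theta>) / ereal t) (at_right 0)"
    using ev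
  proof eventually_elim
    case (elim t)
    have "Lobj f xs (\<lambda>x. \<theta> x + t * hinge \<tau> x) = ereal (G t)" using K2(2)[of t] elim by (simp add: \<phi>_def)
    moreover have "Lobj f xs \<theta> = ereal (G 0)" using K2(2)[of 0] delta_pos by (simp add: phi0)
    ultimately show ?case using elim by (simp add: q_def)
  qed
  ultimately have "((\<lambda>t. (Lobj f xs (\<lambda>x. \<theta> x + t * hinge \<tau> x) - Lobj f xs \<theta>) / ereal t) \<longlongrightarrow> ereal D) (at_right 0)"
    by (rule Lim_transform_eventually)
  then show ?thesis unfolding DL_def by (intro tendsto_Lim) simp_all
qed

end



context ctx begin

lemma G0_eq: "Lobj f xs \<theta> = ereal (G 0)"
  using K2(2)[of 0] delta_pos by (simp add: phi0)

lemma main_ctx: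
  assumes eps: "\<epsilon> > 0" and DE: "\<epsilon> \<le> D" and g: "\<gamma>0 \<le> \<gamma>" and gpos: "\<gamma> > 0"
  shows "ereal (G 0 + \<epsilon>\<^sup>2 / (2 * \<gamma>)) \<le> Lobj f xs (\<phi> (\<epsilon> / \<gamma>))"
proof -
  define t1 where "t1 = \<epsilon> / \<gamma>"
  have t1pos: "0 < t1" using eps gpos by (simp add: t1_def)
  define P where "P t \<longleftrightarrow> Lobj f xs \<theta> \<le> Lobj f xs (\<phi> t)" for t
  define A where "A = {t. 0 \<le> t \<and> t \<le> t1 \<and> (\<forall>s\<in>{0..t}. P s)}"
  have K4: "G 0 + t * \<epsilon> / 2 \<le> G t" "Lobj f xs (\<phi> t) = ereal (G t)" if tA: "t \<in> A" for t
  proof -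
    have t: "0 \<le> t" "t \<le> t1" "P t" using tA by (auto simp: A_def)
    note k = K1[OF t(1) t(3)[unfolded P_def]]
    show "Lobj f xs (\<phi> t) = ereal (G t)" by (rule k(2))
    have tg: "t * \<gamma> \<le> \<epsilon>" using t(2) gpos by (simp add: t1_def le_divide_eq)
    have "t\<^sup>2 * \<gamma>0 \<le> t\<^sup>2 * \<gamma>" using g by (intro mult_left_mono) auto
    also have "\<dots> = t * (t * \<gamma>)" by (simp add: power2_eq_square)
    also have "\<dots> \<le> t * \<epsilon>" using tg t(1) by (intro mult_left_mono)
    finally have a: "t\<^sup>2 / 2 * \<gamma>0 \<le> t * \<epsilon> / 2" by simp
    have b: "t * \<epsilon> \<le> t * D" using DE t(1) by (intro mult_left_mono)
    show "G 0 + t * \<epsilon> / 2 \<le> G t" using k(3) a b by linarith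
  qed
  define s0 where "s0 = min \<delta> (2 * \<epsilon> / (C2 + 1))"
  define a0 where "a0 = min s0 t1"
  have C2p: "0 < C2 + 1" using C2_nonneg by simp
  have a0pos: "0 < a0" using delta_pos eps C2p t1pos by (simp add: a0_def s0_def)
  have a0A: "a0 \<in> A"
  proof -
    have "P s" if s: "0 \<le> s" "s \<le> a0" for s
    proof -
      have sd: "s \<le> \<delta>" "s \<le> 2 * \<epsilon> / (C2 + 1)" using s by (auto simp: a0_def s0_def)
      have "s * (C2 + 1) \<le> 2 * \<epsilon>" using sd(2) C2p by (simp add: le_divide_eq)
      moreover have "s * C2 \<le> s * (C2 + 1)" using s by (intro mult_left_mono) auto
      ultimately have "s * (C2 / 2) \<le> \<epsilon>" by simp
      then have "0 \<le> D - s * (C2 / 2)" using DE by simp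
      then have "0 \<le> s * (D - s * (C2 / 2))" using s by simp
      then have "G 0 \<le> G 0 + s * D - s\<^sup>2 / 2 * C2" by (simp add: algebra_simps power2_eq_square)
      also have "\<dots> \<le> G s" using K2(3)[OF s(1) sd(1)] .
      finally show "P s" unfolding P_def G0_eq K2(2)[OF s(1) sd(1)] by simp
    qed
    then show ?thesis using a0pos by (auto simp: A_def a0_def)
  qed
  define \<eta> where "\<eta> = min \<delta> (a0 * \<epsilon> / (2 * (C1 + 1)))"
  have C1p: "0 < C1 + 1" using C1_nonneg by simp
  have etapos: "0 < \<eta>" using delta_pos a0pos eps C1p by (simp add: \<eta>_def)
  have K5: "min t1 (t + \<eta>) \<in> A" if tA: "t \<in> A" and ta: "a0 \<le> t" for t
  proof -
    have t: "0 \<le> t" "t \<le> t1" "\<forall>s\<in>{0..t}. P s" using tA by (auto simp: A_def)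
    have "P s" if s: "0 \<le> s" "s \<le> min t1 (t + \<eta>)" for s
    proof (cases "s \<le> t")
      case True then show ?thesis using t(3) s by auto
    next
      case False
      have Pt: "P t" using t(3) t(1) by auto
      have s2: "t \<le> s" "s \<le> t + \<delta>" using False s by (auto simp: \<eta>_def)
      note k = K3[OF t(1) Pt[unfolded P_def] s2]
      have "(s - t) * C1 \<le> \<eta> * C1" using s C1_nonneg by (intro mult_right_mono) auto
      also have "\<dots> \<le> \<eta> * (C1 + 1)" using etapos by simp
      also have "\<dots> \<le> a0 * \<epsilon> / (2 * (C1 + 1)) * (C1 + 1)" using C1p by (intro mult_right_mono) (auto simp: \<eta>_def)
      also have "\<dots> = a0 * \<epsilon> / 2" using C1p by (simp add: field_simps)
      finally have c: "(s - t) * C1 \<le> a0 * \<epsilon> / 2" .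
      have "a0 * \<epsilon> \<le> t * \<epsilon>" using ta eps by (intro mult_right_mono) auto
      then have "G 0 \<le> G s" using K4(1)[OF tA] k(2) c by linarith
      then show "P s" unfolding P_def G0_eq k(1) by simp
    qed
    then show ?thesis using t etapos by (auto simp: A_def)
  qed
  have bdd: "bdd_above A" by (auto simp: A_def intro!: bdd_aboveI[of _ t1])
  have ne: "A \<noteq> {}" using a0A by auto
  define a where "a = Sup A"
  have "\<exists>t\<in>A. a - \<eta> < t"
  proof (rule ccontr)
    assume "\<not> ?thesis"
    then have "\<forall>t\<in>A. t \<le> a - \<eta>" by auto
    then have "a \<le> a - \<eta>" unfolding a_def using ne by (intro cSup_least) auto
    then show False using etapos by simp
  qed
  then obtain t where tA: "t \<in> A" and ta: "a - \<eta> < t" by blast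
  define t' where "t' = max t a0"
  have t'A: "t' \<in> A" using tA a0A by (simp add: t'_def max_def)
  have t'a: "a - \<eta> < t'" "a0 \<le> t'" using ta by (auto simp: t'_def)
  have mA: "min t1 (t' + \<eta>) \<in> A" by (rule K5[OF t'A t'a(2)])
  then have "min t1 (t' + \<eta>) \<le> a" unfolding a_def using bdd by (intro cSup_upper)
  then have "min t1 (t' + \<eta>) = t1" using t'a(1) by (auto simp: min_def split: if_splits)
  with mA have t1A: "t1 \<in> A" by simp
  have Pt1: "P t1" using t1A by (auto simp: A_def)
  note k = K1[OF less_imp_le[OF t1pos] Pt1[unfolded P_def]]
  have "t1 * \<epsilon> \<le> t1 * D" using DE t1pos by (intro mult_left_mono) auto
  moreover have "t1\<^sup>2 / 2 * \<gamma>0 \<le> t1\<^sup>2 / 2 * \<gamma>" using g by (intro mult_left_mono) auto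
  moreover have "t1 * \<epsilon> = \<epsilon>\<^sup>2 / \<gamma>" using gpos by (simp add: t1_def power2_eq_square)
  moreover have "t1\<^sup>2 / 2 * \<gamma> = \<epsilon>\<^sup>2 / (2 * \<gamma>)" using gpos by (simp add: t1_def power2_eq_square)
  moreover have "\<epsilon>\<^sup>2 / \<gamma> - \<epsilon>\<^sup>2 / (2 * \<gamma>) = \<epsilon>\<^sup>2 / (2 * \<gamma>)" using gpos by (simp add: field_simps)
  ultimately have "G 0 + \<epsilon>\<^sup>2 / (2 * \<gamma>) \<le> G t1" using k(3) by linarith
  then show ?thesis unfolding k(2)[folded t1_def] t1_def[symmetric] by simp
qed

end



lemma ereal_diff_ge: "ereal (a + b) \<le> X \<Longrightarrow> ereal b \<le> X - ereal a"
  by (cases X) auto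

theorem mainTheorem2:
  fixes f :: "real \<Rightarrow> real" and \<beta> :: real and xs :: "real list"
    and \<epsilon> sR mR \<tau> :: real and \<theta>prev \<theta>new :: "real \<Rightarrow> real"
  assumes f_nonneg: "\<forall>x\<ge>0. f x \<ge> 0"
    and f_prob: "(\<integral>\<^sup>+ x. ennreal (indicator {0..} x * f x) \<partial>lborel) = 1"
    and A1_cont: "continuous_on {0..} f"
    and A1_pos: "\<forall>x>0. f x > 0"
    and A2: "\<forall>l::real. (\<integral>\<^sup>+ x. ennreal (exp (l * x)) \<partial>dens_measure f) < \<infinity> \<longleftrightarrow> l < \<beta>"
    and A2_lim: "((\<lambda>l. \<integral>\<^sup>+ x. ennreal (exp (l * x)) \<partial>dens_measure f) \<longlongrightarrow> \<infinity>) (at_left \<beta>)"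
    and A3: "\<forall>l::real. (\<integral>\<^sup>+ x. ennreal (exp (l * x)) \<partial>dens_measure f) < \<infinity> \<longrightarrow>
               (\<integral>\<^sup>+ x. ennreal (x\<^sup>2 * exp (l * x)) \<partial>dens_measure f) < \<infinity>"
    and data_ne: "xs \<noteq> []"
    and data_sorted: "sorted xs"
    and data_nonneg: "\<forall>x\<in>set xs. x \<ge> 0"
    and eps_pos: "\<epsilon> > 0"
    and prev_mem: "\<theta>prev \<in> Theta \<inter> PL"
    and tau_nonneg: "\<tau> \<ge> 0"
    and tau_max: "\<forall>\<tau>'\<ge>0. DL f xs \<theta>prev (hinge \<tau>') \<le> DL f xs \<theta>prev (hinge \<tau>)"
    and new_mem: "\<theta>new \<in> Theta \<inter> PL_on (breakpoints \<theta>prev \<union> {\<tau>})"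
    and new_max: "\<forall>\<theta>\<in>Theta \<inter> PL_on (breakpoints \<theta>prev \<union> {\<tau>}). Lobj f xs \<theta> \<le> Lobj f xs \<theta>new"
    and R_finite: "\<bar>Lobj f xs \<theta>prev\<bar> \<noteq> \<infinity>"
    and sR_nonneg: "sR \<ge> 0"
    and mR_lt: "mR < \<beta>"
    and sR_mR_bound: "\<forall>\<phi>\<in>Theta. Lobj f xs \<phi> \<ge> Lobj f xs \<theta>prev \<longrightarrow>
          \<bar>\<phi> 0\<bar> \<le> sR \<and> (SUP x\<in>{0..}. right_deriv \<phi> x) \<le> mR"
    and sup_ge: "(SUP \<tau>'\<in>{0..}. DL f xs \<theta>prev (hinge \<tau>')) \<ge> ereal \<epsilon>"
  shows "Lobj f xs \<theta>new - Lobj f xs \<theta>prev \<ge>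
           ereal (\<epsilon>\<^sup>2 / (2 * (\<integral>x. (x\<^sup>2 + (last xs)\<^sup>2) * exp (sR + mR * x) \<partial>dens_measure f)))"
proof -
  interpret ctx f \<beta> xs sR mR \<tau> \<theta>prev
    by (unfold_locales) (use A1_cont A2 A3 data_nonneg prev_mem tau_nonneg mR_lt sR_mR_bound in auto)
  have "(SUP \<tau>'\<in>{0..}. DL f xs \<theta>prev (hinge \<tau>')) \<le> DL f xs \<theta>prev (hinge \<tau>)"
    using tau_max by (intro SUP_least) auto
  then have "ereal \<epsilon> \<le> ereal D" using sup_ge DL_eq order_trans by metis
  then have DE: "\<epsilon> \<le> D" by simp
  define \<gamma> where "\<gamma> = (\<integral>x. (x\<^sup>2 + (last xs)\<^sup>2) * exp (sR + mR * x) \<partial>dens_measure f)"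
  have "\<gamma> = (\<integral>x. x\<^sup>2 * E0 x + (last xs)\<^sup>2 * E0 x \<partial>M)"
    unfolding \<gamma>_def E0_def by (simp add: distrib_right)
  also have "\<dots> = \<gamma>0 + (last xs)\<^sup>2 * (\<integral>x. E0 x \<partial>M)"
    using E0_int by (simp add: \<gamma>0_def)
  finally have g_eq: "\<gamma> = \<gamma>0 + (last xs)\<^sup>2 * (\<integral>x. E0 x \<partial>M)" .
  have "0 \<le> (\<integral>x. E0 x \<partial>M)" unfolding E0_def by (intro integral_nonneg_AE) auto
  then have g: "\<gamma>0 \<le> \<gamma>" using g_eq by simp
  have newge: "Lobj f xs (\<phi> t) \<le> Lobj f xs \<theta>new" if "0 \<le> t" for t
    using new_max phi_in[OF that] by blast
  show ?thesis
  proof (cases "\<gamma> = 0")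
    case True
    have "Lobj f xs \<theta>prev \<le> Lobj f xs \<theta>new" using newge[of 0] by (simp add: phi0)
    then have "ereal (G 0 + 0) \<le> Lobj f xs \<theta>new" using G0_eq by simp
    then have "ereal 0 \<le> Lobj f xs \<theta>new - ereal (G 0)" by (rule ereal_diff_ge)
    then show ?thesis unfolding \<gamma>_def[symmetric] True G0_eq by simp
  next
    case False
    then have gpos: "\<gamma> > 0" using g g0_nonneg by simp
    have "ereal (G 0 + \<epsilon>\<^sup>2 / (2 * \<gamma>)) \<le> Lobj f xs (\<phi> (\<epsilon> / \<gamma>))"
      by (rule main_ctx[OF eps_pos DE g gpos])
    also have "\<dots> \<le> Lobj f xs \<theta>new" using newge eps_pos gpos by simp
    finally have "ereal (\<epsilon>\<^sup>2 / (2 * \<gamma>)) \<le> Lobj f xs \<theta>new - ereal (G 0)" by (rule ereal_diff_ge)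
    then show ?thesis unfolding \<gamma>_def[symmetric] G0_eq by simp
  qed
qed


end
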